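(* For any stable set $\Pi$ of forward-looking tree-profiles, the spi-logic $\mathsf{SPi}+\Sigma'_\Pi$, where $\Sigma'_\Pi=\{\iota'_\pi\mid\pi\in\Pi\}$, is complete.
   Context: Fix a non-empty signature $\mathcal R$. Sp-formulas: built from propositional variables and $\top$ with $\wedge$ and diamonds $\Diamond_R$ ($R\in\mathcal R$); sp-implications $\sigma\to\tau$. A SLO is an algebra $(A,\wedge,\top,\Diamond_R)_R$ with $(A,\wedge,\top)$ a meet-semilattice with top $\top$ and each $\Diamond_R$ monotone; it validates $\sigma\to\tau$ if $\sigma[\mathfrak a]\le\tau[\mathfrak a]$ for all valuations. Frames $\mathfrak F=(W,R^{\mathfrak F})_R$ with standard Kripke semantics. $\Sigma\models_{\mathsf{Kr}}\iota$ (resp. $\models_{\mathsf{SLO}}$): $\iota$ valid in all frames (resp. SLOs) validating $\Sigma$. The spi-logic $\mathsf{SPi}+\Sigma=\{\iota\mid\Sigma\models_{\mathsf{SLO}}\iota\}$ is complete if $\Sigma\models_{\mathsf{Kr}}\iota\iff\Sigma\models_{\mathsf{SLO}}\iota$ for all $\iota$. A homomorphism $h:\mathfrak F_1\to\mathfrak F_2$ of frames is a map with $(x,y)\in R^{\mathfrak F_1}\Rightarrow(h(x),h(y))\in R^{\mathfrak F_2}$ for all $R$. A frame is a tree if $(W,\bigcup_RR^{\mathfrak F})$ is a finite directed tree and the relations are pairwise disjoint. A profile $\pi=(\mathfrak G,S,u,v)$ consists of a finite rooted frame $\mathfrak G=(\Delta,R^{\mathfrak G})_R$, $u,v\in\Delta$,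 $S\in\mathcal R$ with $(u,v)\notin S^{\mathfrak G}$; it represents $\Phi_\pi=\forall\bar x\big(\bigwedge_{(x_i,x_j)\in R^{\mathfrak G}}R(x_i,x_j)\to S(u,v)\big)$ (universal closure over $\Delta$). It is a tree-profile if $\mathfrak G$ is a tree, and forward-looking if $u<_{\mathfrak G}v$, where $<_{\mathfrak G}$ is the transitive closure of $\bigcup_R R^{\mathfrak G}$. For a set $\Pi$ of profiles and a frame $\mathfrak F$, $\Pi(\mathfrak F)$ is the smallest frame on the same domain extending $\mathfrak F$ (relation-wise) that satisfies $\Phi_\pi$ for all $\pi\in\Pi$. $\Pi$ is stable if for every $\pi=(\mathfrak G,S,u,v)\in\Pi$ and every tree $\mathfrak T$, every homomorphism $\mathfrak G\to\Pi(\mathfrak T)$ is also a homomorphism $\mathfrak G\to\mathfrak T$. For a model $\mathfrak N=(\mathfrak F,\mathfrak v)$ over a finite frame with root $r$ and no directed cycles, where only finitely many variables are non-empty, define inductively $\mathrm{for}^{\mathfrak N}_w=\bigwedge_{w\in\mathfrak v(p)}p\wedge\bigwedge_{(w,v)\in R^{\mathfrak F},R\in\mathcal R}\Diamond_R\,\mathrm{for}^{\mathfrak N}_v$ (empty conjunction $=\top$) and $\mathrm{for}(\mathfrak N)=\mathrm{for}^{\mathfrak N}_r$. For a forward-looking tree-profile $\pi=(\mathfrak G,S,u,v)$ take a variable $p_x$ for each $x\in\Delta$, the valuation $\mathfrak v(p_x)=\{x\}$, $\mathfrak M=(\mathfrak G,\mathfrak v)$ and $\mathfrak M'=(\mathfrak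 G',\mathfrak v)$ where $\mathfrak G'$ equals $\mathfrak G$ except $S^{\mathfrak G'}=S^{\mathfrak G}\cup\{(u,v)\}$; then $\iota'_\pi=\big(\mathrm{for}(\mathfrak M)\to\mathrm{for}(\mathfrak M')\big)$. *)

theory Defs
  imports Main
begin

text \<open>Propositional variables are natural numbers; relation names have type 'r
  (any type, hence a non-empty signature).\<close>

datatype 'r spf = Var nat | Top | And "'r spf" "'r spf" | Dia 'r "'r spf"

type_synonym 'r spi = "'r spf \<times> 'r spf"   \<comment> \<open>(sigma, tau) stands for sigma \<rightarrow> tau\<close>

definition is_frame :: "'w set \<Rightarrow> ('r \<Rightarrow> ('w \<times> 'w) set) \<Rightarrow> bool" where
  "is_frame W R \<longleftrightarrow> (\<forall>r. R r \<subseteq> W \<times> W)"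

fun ksat :: "('r \<Rightarrow> ('w \<times> 'w) set) \<Rightarrow> (nat \<Rightarrow> 'w set) \<Rightarrow> 'w \<Rightarrow> 'r spf \<Rightarrow> bool" where
  "ksat R V w (Var p) = (w \<in> V p)"
| "ksat R V w Top = True"
| "ksat R V w (And a b) = (ksat R V w a \<and> ksat R V w b)"
| "ksat R V w (Dia r a) = (\<exists>v. (w, v) \<in> R r \<and> ksat R V v a)"

definition frame_valid :: "'w set \<Rightarrow> ('r \<Rightarrow> ('w \<times> 'w) set) \<Rightarrow> 'r spi \<Rightarrow> bool" where
  "frame_valid W R \<iota> \<longleftrightarrow>
     (\<forall>V. (\<forall>p. V p \<subseteq> W) \<longrightarrow> (\<forall>w\<in>W. ksat R V w (fst \<iota>) \<longrightarrow> ksat R V w (snd \<iota>)))"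

definition Kr_cons :: "'r spi set \<Rightarrow> 'r spi \<Rightarrow> 'w itself \<Rightarrow> bool" where
  "Kr_cons \<Sigma> \<iota> _ \<longleftrightarrow>
     (\<forall>(W::'w set) R. is_frame W R \<longrightarrow> (\<forall>s\<in>\<Sigma>. frame_valid W R s) \<longrightarrow> frame_valid W R \<iota>)"

text \<open>An SLO on a type 'a that is a meet-semilattice with top: a family D of
  monotone operators.\<close>

fun slo_eval :: "('r \<Rightarrow> 'a::{semilattice_inf,order_top} \<Rightarrow> 'a) \<Rightarrow> (nat \<Rightarrow> 'a) \<Rightarrow> 'r spf \<Rightarrow> 'a" where
  "slo_eval D a (Var p) = a p"
| "slo_eval D a Top = top"
| "slo_eval D a (And x y) = inf (slo_eval D a x) (slo_eval D a y)"
| "slo_eval D a (Dia r x) = D r (slo_eval D a x)"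

definition slo_valid :: "('r \<Rightarrow> 'a::{semilattice_inf,order_top} \<Rightarrow> 'a) \<Rightarrow> 'r spi \<Rightarrow> bool" where
  "slo_valid D \<iota> \<longleftrightarrow> (\<forall>a. slo_eval D a (fst \<iota>) \<le> slo_eval D a (snd \<iota>))"

definition SLO_cons :: "'r spi set \<Rightarrow> 'r spi \<Rightarrow> 'a::{semilattice_inf,order_top} itself \<Rightarrow> bool" where
  "SLO_cons \<Sigma> \<iota> _ \<longleftrightarrow>
     (\<forall>D :: 'r \<Rightarrow> 'a \<Rightarrow> 'a. (\<forall>r. mono (D r)) \<longrightarrow> (\<forall>s\<in>\<Sigma>. slo_valid D s) \<longrightarrow> slo_valid D \<iota>)"

text \<open>Since HOL cannot quantify over types inside a
  formula, completeness (for all frames and all SLOs of every size) is expressed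
  by the two nontrivial implications with universally quantified type variables:
  Kripke consequence over frames on subsets of nat already implies SLO consequence
  in every SLO of type 'a; and SLO consequence over SLOs on 'w set implies Kripke
  consequence over frames on 'w. Together (for all 'a, 'w) this is equivalent to
  the equivalence of Kripke consequence over all frames and SLO consequence over
  all SLOs.\<close>
definition spi_complete ::
  "'r spi set \<Rightarrow> 'a::{semilattice_inf,order_top} itself \<Rightarrow> 'w itself \<Rightarrow> bool" where
  "spi_complete \<Sigma> ta tw \<longleftrightarrow>
     (\<forall>\<iota>. Kr_cons \<Sigma> \<iota> TYPE(nat) \<longrightarrow> SLO_cons \<Sigma> \<iota> TYPE('a)) \<and>
     (\<forall>\<iota>. SLO_cons \<Sigma> \<iota> TYPE('w set) \<longrightarrow> Kr_cons \<Sigma> \<iota> TYPE('w))"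

definition edges :: "('r \<Rightarrow> ('w \<times> 'w) set) \<Rightarrow> ('w \<times> 'w) set" where
  "edges R = (\<Union>r. R r)"

definition is_hom ::
  "'v set \<Rightarrow> ('r \<Rightarrow> ('v \<times> 'v) set) \<Rightarrow> 'w set \<Rightarrow> ('r \<Rightarrow> ('w \<times> 'w) set) \<Rightarrow> ('v \<Rightarrow> 'w) \<Rightarrow> bool" where
  "is_hom W1 R1 W2 R2 h \<longleftrightarrow>
     (\<forall>x\<in>W1. h x \<in> W2) \<and> (\<forall>r x y. (x, y) \<in> R1 r \<longrightarrow> (h x, h y) \<in> R2 r)"

definition is_root :: "'w set \<Rightarrow> ('r \<Rightarrow> ('w \<times> 'w) set) \<Rightarrow> 'w \<Rightarrow> bool" where
  "is_root W R x \<longleftrightarrow> x \<in> W \<and> (\<forall>y\<in>W. (x, y) \<in> (edges R)\<^sup>*)"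

definition finite_rooted_frame :: "'w set \<Rightarrow> ('r \<Rightarrow> ('w \<times> 'w) set) \<Rightarrow> bool" where
  "finite_rooted_frame W R \<longleftrightarrow> finite W \<and> is_frame W R \<and> (\<exists>x. is_root W R x)"

definition is_tree :: "'w set \<Rightarrow> ('r \<Rightarrow> ('w \<times> 'w) set) \<Rightarrow> bool" where
  "is_tree W R \<longleftrightarrow> finite W \<and> is_frame W R \<and>
     (\<exists>x. is_root W R x \<and> (\<forall>y. (y, x) \<notin> edges R) \<and>
          (\<forall>z\<in>W. z \<noteq> x \<longrightarrow> (\<exists>!y. (y, z) \<in> edges R))) \<and>
     (\<forall>r s. r \<noteq> s \<longrightarrow> R r \<inter> R s = {})"

record 'r profile =
  pdom :: "nat set"
  prel :: "'r \<Rightarrow> (nat \<times> nat) set"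
  pS :: 'r
  pu :: nat
  pv :: nat

definition is_profile :: "'r profile \<Rightarrow> bool" where
  "is_profile \<pi> \<longleftrightarrow> finite_rooted_frame (pdom \<pi>) (prel \<pi>) \<and>
     pu \<pi> \<in> pdom \<pi> \<and> pv \<pi> \<in> pdom \<pi> \<and> (pu \<pi>, pv \<pi>) \<notin> prel \<pi> (pS \<pi>)"

definition tree_profile :: "'r profile \<Rightarrow> bool" where
  "tree_profile \<pi> \<longleftrightarrow> is_profile \<pi> \<and> is_tree (pdom \<pi>) (prel \<pi>)"

definition forward_looking :: "'r profile \<Rightarrow> bool" where
  "forward_looking \<pi> \<longleftrightarrow> (pu \<pi>, pv \<pi>) \<in> (edges (prel \<pi>))\<^sup>+"

definition sat_Phi :: "'r profile \<Rightarrow> 'w set \<Rightarrow> ('r \<Rightarrow> ('w \<times> 'w) set) \<Rightarrow> bool" where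
  "sat_Phi \<pi> W R \<longleftrightarrow>
     (\<forall>h. (\<forall>x\<in>pdom \<pi>. h x \<in> W) \<longrightarrow>
          (\<forall>r x y. (x, y) \<in> prel \<pi> r \<longrightarrow> (h x, h y) \<in> R r) \<longrightarrow>
          (h (pu \<pi>), h (pv \<pi>)) \<in> R (pS \<pi>))"

definition Pi_closure ::
  "'r profile set \<Rightarrow> 'w set \<Rightarrow> ('r \<Rightarrow> ('w \<times> 'w) set) \<Rightarrow> ('r \<Rightarrow> ('w \<times> 'w) set)" where
  "Pi_closure \<Pi> W R = (\<lambda>r. \<Inter>{R' r | R'. is_frame W R' \<and> (\<forall>s. R s \<subseteq> R' s) \<and>
                                          (\<forall>\<pi>\<in>\<Pi>. sat_Phi \<pi> W R')})"

definition stable :: "'r profile set \<Rightarrow> bool" where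
  "stable \<Pi> \<longleftrightarrow>
     (\<forall>\<pi>\<in>\<Pi>. \<forall>(W::nat set) R h. is_tree W R \<longrightarrow>
        is_hom (pdom \<pi>) (prel \<pi>) W (Pi_closure \<Pi> W R) h \<longrightarrow>
        is_hom (pdom \<pi>) (prel \<pi>) W R h)"

text \<open>A fixed enumeration of a finite set (the order of conjuncts is immaterial).\<close>
definition list_of :: "'a set \<Rightarrow> 'a list" where
  "list_of A = (SOME xs. distinct xs \<and> set xs = A)"

fun conj :: "'r spf list \<Rightarrow> 'r spf" where
  "conj [] = Top"
| "conj [x] = x"
| "conj (x # xs) = And x (conj xs)"

text \<open>for^N_w computed with fuel n (for an acyclic frame on W, fuel card W suffices).
  P is the finite set of variables with non-empty valuation.\<close>
fun for_at :: "nat \<Rightarrow> nat set \<Rightarrow> (nat \<Rightarrow> 'w set) \<Rightarrow> ('r \<Rightarrow> ('w \<times> 'w) set) \<Rightarrow> 'w \<Rightarrow> 'r spf" where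
  "for_at 0 P V R w = Top"
| "for_at (Suc n) P V R w =
     conj (map Var (list_of {p\<in>P. w \<in> V p}) @
           map (\<lambda>(r, v). Dia r (for_at n P V R v)) (list_of {(r, v). (w, v) \<in> R r}))"

definition for_model :: "'w set \<Rightarrow> ('r \<Rightarrow> ('w \<times> 'w) set) \<Rightarrow> nat set \<Rightarrow> (nat \<Rightarrow> 'w set) \<Rightarrow> 'w \<Rightarrow> 'r spf" where
  "for_model W R P V root = for_at (card W) P V R root"

definition root_of :: "'w set \<Rightarrow> ('r \<Rightarrow> ('w \<times> 'w) set) \<Rightarrow> 'w" where
  "root_of W R = (SOME x. is_root W R x)"

definition iota' :: "'r profile \<Rightarrow> 'r spi" where
  "iota' \<pi> =
    (let \<Delta> = pdom \<pi>; G = prel \<pi>;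
         G' = G(pS \<pi> := G (pS \<pi>) \<union> {(pu \<pi>, pv \<pi>)});
         V = (\<lambda>p. if p \<in> \<Delta> then {p} else {});
         r = root_of \<Delta> G
     in (for_model \<Delta> G \<Delta> V r, for_model \<Delta> G' \<Delta> V r))"

definition Sigma' :: "'r profile set \<Rightarrow> 'r spi set" where
  "Sigma' \<Pi> = iota' ` \<Pi>"

end

theory Submission
  imports Defs "HOL-Library.Countable"
begin


lemma ksat_conj: "ksat R V w (conj xs) \<longleftrightarrow> (\<forall>\<phi>\<in>set xs. ksat R V w \<phi>)"
  by (induction xs rule: conj.induct) auto

lemma slo_conj: "c \<le> slo_eval D a (conj xs) \<longleftrightarrow> (\<forall>\<phi>\<in>set xs. c \<le> slo_eval D a \<phi>)"
  by (induction xs rule: conj.induct) auto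

lemma set_list_of: "finite A \<Longrightarrow> set (list_of A) = A"
  unfolding list_of_def by (metis (mono_tags, lifting) finite_distinct_list someI_ex)

definition succs :: "('r \<Rightarrow> ('w \<times> 'w) set) \<Rightarrow> 'w \<Rightarrow> ('r \<times> 'w) set" where
  "succs R x = {(r, v). (x, v) \<in> R r}"

lemma for_at_set:
  assumes "finite P" "finite (succs R0 x)"
  shows "set (map Var (list_of {p\<in>P. x \<in> V0 p}) @
           map (\<lambda>(r, v). Dia r (for_at n P V0 R0 v)) (list_of {(r, v). (x, v) \<in> R0 r}))
   = Var ` {p\<in>P. x \<in> V0 p} \<union> (\<lambda>(r, v). Dia r (for_at n P V0 R0 v)) ` succs R0 x"
  using assms by (simp add: set_list_of succs_def)

lemma ksat_for_at_Suc:
  assumes "finite P" "finite (succs R0 x)"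
  shows "ksat R V w (for_at (Suc n) P V0 R0 x) \<longleftrightarrow>
    (\<forall>p\<in>P. x \<in> V0 p \<longrightarrow> w \<in> V p) \<and>
    (\<forall>r v. (x, v) \<in> R0 r \<longrightarrow> (\<exists>w'. (w, w') \<in> R r \<and> ksat R V w' (for_at n P V0 R0 v)))"
  unfolding for_at.simps ksat_conj for_at_set[OF assms] by (simp add: succs_def ball_Un; blast)

lemma slo_for_at_Suc:
  assumes "finite P" "finite (succs R0 x)"
  shows "c \<le> slo_eval D b (for_at (Suc n) P V0 R0 x) \<longleftrightarrow>
    (\<forall>p\<in>P. x \<in> V0 p \<longrightarrow> c \<le> b p) \<and>
    (\<forall>r v. (x, v) \<in> R0 r \<longrightarrow> c \<le> D r (slo_eval D b (for_at n P V0 R0 v)))"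
  unfolding for_at.simps slo_conj for_at_set[OF assms] by (simp add: succs_def ball_Un; blast)




lemma hom_truth:
  assumes "finite P" "\<forall>x. finite (succs R0 x)"
    "\<forall>p\<in>P. \<forall>x. x \<in> V0 p \<longrightarrow> g x \<in> V p"
    "\<forall>r x y. (x,y) \<in> R0 r \<longrightarrow> (g x, g y) \<in> R r"
  shows "ksat R V (g x) (for_at n P V0 R0 x)"
proof (induction n arbitrary: x)
  case 0 then show ?case by simp
next
  case (Suc n)
  show ?case unfolding ksat_for_at_Suc[OF assms(1) assms(2)[rule_format]]
    using assms(3,4) Suc by blast
qed

lemma hom_slo:
  assumes "finite P" "\<forall>x. finite (succs R0 x)" "\<forall>r. mono (D r)"
    "\<forall>p\<in>P. \<forall>x. x \<in> V0 p \<longrightarrow> c x \<le> b p"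
    "\<forall>r x y. (x,y) \<in> R0 r \<longrightarrow> c x \<le> D r (c y)"
  shows "c x \<le> slo_eval D b (for_at n P V0 R0 x)"
proof (induction n arbitrary: x)
  case 0 then show ?case by simp
next
  case (Suc n)
  have "c x \<le> D r (slo_eval D b (for_at n P V0 R0 y))" if "(x, y) \<in> R0 r" for r y
  proof -
    have "c x \<le> D r (c y)" using assms(5) that by blast
    also have "\<dots> \<le> D r (slo_eval D b (for_at n P V0 R0 y))"
      using assms(3) Suc.IH by (simp add: monoD)
    finally show ?thesis .
  qed
  then show ?case unfolding slo_for_at_Suc[OF assms(1) assms(2)[rule_format]]
    using assms(4) by blast
qed

locale prof =
  fixes \<pi> :: "'r profile"
  assumes tp: "tree_profile \<pi>" and fl: "forward_looking \<pi>"
begin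

abbreviation "\<Delta> \<equiv> pdom \<pi>"
abbreviation "G \<equiv> prel \<pi>"
abbreviation "E \<equiv> edges G"
abbreviation "u \<equiv> pu \<pi>"
abbreviation "v \<equiv> pv \<pi>"
abbreviation "S \<equiv> pS \<pi>"
definition "x0 = root_of \<Delta> G"
definition "V0 = (\<lambda>p. if p \<in> \<Delta> then {p} else ({}::nat set))"
definition "G' = G(S := G S \<union> {(u, v)})"
definition "anc y = {w. (w, y) \<in> E\<^sup>+}"
definition "dG y = card (anc y)"

lemma fin: "finite \<Delta>" using tp unfolding tree_profile_def is_tree_def by auto
lemma frm: "G r \<subseteq> \<Delta> \<times> \<Delta>" using tp unfolding tree_profile_def is_tree_def is_frame_def by auto
lemma E_sub: "E \<subseteq> \<Delta> \<times> \<Delta>" using frm unfolding edges_def by auto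
lemma disj: "r \<noteq> s \<Longrightarrow> G r \<inter> G s = {}" using tp unfolding tree_profile_def is_tree_def by auto
lemma uv: "u \<in> \<Delta>" "v \<in> \<Delta>" "(u, v) \<notin> G S" using tp unfolding tree_profile_def is_profile_def by auto
lemma uvE: "(u, v) \<in> E\<^sup>+" using fl unfolding forward_looking_def by auto

lemma E_iff: "(x, y) \<in> E \<longleftrightarrow> (\<exists>r. (x, y) \<in> G r)" unfolding edges_def by auto

lemma rel_uniq: "(x, y) \<in> G r \<Longrightarrow> (x, y) \<in> G s \<Longrightarrow> r = s" using disj by blast

lemma tree_ex: "\<exists>x. is_root \<Delta> G x \<and> (\<forall>y. (y, x) \<notin> E) \<and>
          (\<forall>z\<in>\<Delta>. z \<noteq> x \<longrightarrow> (\<exists>!y. (y, z) \<in> E))"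
  using tp unfolding tree_profile_def is_tree_def by auto

definition "rt = (SOME x. is_root \<Delta> G x \<and> (\<forall>y. (y, x) \<notin> E) \<and>
          (\<forall>z\<in>\<Delta>. z \<noteq> x \<longrightarrow> (\<exists>!y. (y, z) \<in> E)))"

lemma rt: "is_root \<Delta> G rt" "\<And>y. (y, rt) \<notin> E"
  "\<And>z. z \<in> \<Delta> \<Longrightarrow> z \<noteq> rt \<Longrightarrow> \<exists>!y. (y, z) \<in> E"
  using someI_ex[OF tree_ex] unfolding rt_def by blast+

lemma rt_in: "rt \<in> \<Delta>" using rt(1) unfolding is_root_def by auto
lemma rt_reach: "y \<in> \<Delta> \<Longrightarrow> (rt, y) \<in> E\<^sup>*" using rt(1) unfolding is_root_def by auto

lemma no_pred_trancl: "(y, rt) \<notin> E\<^sup>+"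
  using rt(2) by (metis tranclD2)

lemma pred_uniq: "(y, z) \<in> E \<Longrightarrow> (y', z) \<in> E \<Longrightarrow> y = y'"
proof -
  assume a: "(y, z) \<in> E" "(y', z) \<in> E"
  then have "z \<in> \<Delta>" "z \<noteq> rt" using E_sub rt(2) by auto
  then show ?thesis using rt(3) a by blast
qed

lemma x0_rt: "x0 = rt"
proof -
  have ex: "\<exists>x. is_root \<Delta> G x" using rt(1) by blast
  have r: "is_root \<Delta> G x0" unfolding x0_def root_of_def using someI_ex[OF ex] .
  then have "(x0, rt) \<in> E\<^sup>*" using rt_in unfolding is_root_def by auto
  then show ?thesis using no_pred_trancl by (metis rtranclD)
qed

lemma acyc: "(y, y) \<notin> E\<^sup>+"
proof
  assume cy: "(y, y) \<in> E\<^sup>+"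
  then have "y \<in> \<Delta>" using E_sub by (metis SigmaD1 subsetD tranclD)
  then have "(rt, y) \<in> E\<^sup>*" by (rule rt_reach)
  moreover have "(rt, z) \<in> E\<^sup>* \<Longrightarrow> (z, z) \<notin> E\<^sup>+" for z
  proof (induction rule: rtrancl_induct)
    case base then show ?case using no_pred_trancl by blast
  next
    case (step y z)
    show ?case
    proof
      assume "(z, z) \<in> E\<^sup>+"
      then obtain y' where "(z, y') \<in> E\<^sup>*" "(y', z) \<in> E" by (metis tranclD2)
      with step have "y' = y" using pred_uniq by blast
      then have "(y, y) \<in> E\<^sup>+" using step \<open>(z, y') \<in> E\<^sup>*\<close> by (metis rtrancl_into_trancl2)
      with step show False by blast
    qed
  qed
  ultimately show False using cy by blast
qed

lemma anc_sub: "anc y \<subseteq> \<Delta>" unfolding anc_def using E_sub by (auto dest: tranclD)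
lemma anc_fin: "finite (anc y)" using anc_sub fin finite_subset by blast
lemma anc_notin: "y \<notin> anc y" unfolding anc_def using acyc by auto
lemma dG_less: "y \<in> \<Delta> \<Longrightarrow> dG y < card \<Delta>"
proof -
  assume "y \<in> \<Delta>"
  then have "anc y \<subset> \<Delta>" using anc_sub anc_notin by blast
  then show ?thesis unfolding dG_def using fin by (rule psubset_card_mono[rotated])
qed

lemma anc_edge: "(y, z) \<in> E \<Longrightarrow> anc z = insert y (anc y)"
proof
  assume e: "(y, z) \<in> E"
  show "anc z \<subseteq> insert y (anc y)"
  proof
    fix w assume "w \<in> anc z"
    then have wz: "(w, z) \<in> E\<^sup>+" unfolding anc_def by simp
    obtain y' where y': "(w, y') \<in> E\<^sup>*" "(y', z) \<in> E" using tranclD2[OF wz] by blast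
    have "y' = y" using pred_uniq[OF y'(2) e] .
    then have "(w, y) \<in> E\<^sup>*" using y'(1) by simp
    then have "w = y \<or> (w, y) \<in> E\<^sup>+" by (auto simp: rtrancl_eq_or_trancl)
    then show "w \<in> insert y (anc y)" unfolding anc_def by blast
  qed
  show "insert y (anc y) \<subseteq> anc z" using e unfolding anc_def
    by (auto intro: trancl_into_trancl)
qed

lemma dG_edge: "(y, z) \<in> E \<Longrightarrow> dG z = Suc (dG y)"
proof -
  assume e: "(y, z) \<in> E"
  show ?thesis unfolding dG_def anc_edge[OF e] using anc_fin[of y] anc_notin[of y] by simp
qed

lemma dG_rt: "dG rt = 0" unfolding dG_def anc_def using no_pred_trancl by simp

lemma dG_0: "y \<in> \<Delta> \<Longrightarrow> dG y = 0 \<Longrightarrow> y = rt"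
proof -
  assume a: "y \<in> \<Delta>" "dG y = 0"
  then have "anc y = {}" unfolding dG_def using anc_fin by simp
  moreover have "(rt, y) \<in> E\<^sup>*" using a rt_reach by blast
  ultimately show ?thesis unfolding anc_def
  proof -
    assume e: "{w. (w, y) \<in> E\<^sup>+} = {}" and r: "(rt, y) \<in> E\<^sup>*"
    show "y = rt"
    proof (rule ccontr)
      assume "y \<noteq> rt"
      with r have "(rt, y) \<in> E\<^sup>+" by (simp add: rtrancl_eq_or_trancl)
      with e show False by blast
    qed
  qed
qed

lemma dG_trancl: "(y, z) \<in> E\<^sup>+ \<Longrightarrow> dG y < dG z"
proof (induction rule: trancl_induct)
  case (base z) then show ?case by (simp add: dG_edge)
next
  case (step z w) then show ?case by (simp add: dG_edge)
qed

lemma succs_G_fin: "finite (succs G x)"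
proof -
  have "inj_on snd (succs G x)" unfolding succs_def inj_on_def using rel_uniq by auto
  moreover have "snd ` succs G x \<subseteq> \<Delta>" unfolding succs_def using frm by fastforce
  ultimately show ?thesis using fin by (meson finite_imageD finite_subset)
qed

lemma succs_G'_fin: "finite (succs G' x)"
proof -
  have "succs G' x \<subseteq> succs G x \<union> {(S, v)}" unfolding succs_def G'_def by (auto split: if_splits)
  then show ?thesis using succs_G_fin by (meson finite.emptyI finite.insertI finite_Un finite_subset)
qed

lemma G_G': "G r \<subseteq> G' r" unfolding G'_def by auto
lemma G'_frm: "G' r \<subseteq> \<Delta> \<times> \<Delta>" unfolding G'_def using frm uv by auto

lemma iota_fst: "fst (iota' \<pi>) = for_at (card \<Delta>) \<Delta> V0 G rt"
  by (simp only: iota'_def Let_def for_model_def fst_conv V0_def x0_rt[unfolded x0_def])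
lemma iota_snd: "snd (iota' \<pi>) = for_at (card \<Delta>) \<Delta> V0 G' rt"
  by (simp only: iota'_def Let_def for_model_def snd_conv V0_def G'_def x0_rt[unfolded x0_def])

end



context prof begin

lemma V0_iff: "p \<in> \<Delta> \<Longrightarrow> x \<in> V0 p \<longleftrightarrow> x = p" unfolding V0_def by auto

lemma path:
  obtains k f where "f 0 = rt" "f k = u" "\<forall>i<k. (f i, f (Suc i)) \<in> E"
    "\<forall>i\<le>k. dG (f i) = i \<and> f i \<in> \<Delta>" "Suc k < card \<Delta>"
proof -
  have "(rt, u) \<in> E\<^sup>*" using rt_reach uv by blast
  then obtain n where "(rt, u) \<in> E ^^ n" using rtrancl_power by blast
  then obtain f where f: "f 0 = rt" "f n = u" "\<forall>i<n. (f i, f (Suc i)) \<in> E"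
    using relpow_fun_conv by metis
  have d: "dG (f i) = i \<and> f i \<in> \<Delta>" if "i \<le> n" for i
    using that
  proof (induction i)
    case 0 then show ?case using f dG_rt rt_in by simp
  next
    case (Suc i)
    then have e: "(f i, f (Suc i)) \<in> E" using f by simp
    then show ?case using Suc dG_edge E_sub by auto
  qed
  have "dG u = n" using d[of n] f(2) by simp
  moreover have "dG u < dG v" using dG_trancl uvE by blast
  moreover have "dG v < card \<Delta>" using dG_less uv by blast
  ultimately have "Suc n < card \<Delta>" by simp
  then show ?thesis using that f d by blast
qed

definition "par y = (THE z. (z, y) \<in> E)"
definition "rel y = (THE r. (par y, y) \<in> G r)"

lemma par_eq: "(x, y) \<in> E \<Longrightarrow> par y = x"
  unfolding par_def using pred_uniq by blast
lemma rel_eq: "(x, y) \<in> G r \<Longrightarrow> rel y = r"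
proof -
  assume a: "(x, y) \<in> G r"
  then have "par y = x" using par_eq E_iff by blast
  then show ?thesis unfolding rel_def using a rel_uniq by blast
qed

lemma truth_hom:
  assumes "ksat R V w (for_at (card \<Delta>) \<Delta> V0 G rt)"
  shows "\<exists>g. g rt = w \<and> (\<forall>x\<in>\<Delta>. g x \<in> V x) \<and> (\<forall>r x y. (x, y) \<in> G r \<longrightarrow> (g x, g y) \<in> R r)"
proof -
  define gd where "gd = rec_nat (\<lambda>y. w) (\<lambda>k f y. SOME w'. (f (par y), w') \<in> R (rel y) \<and>
       ksat R V w' (for_at (card \<Delta> - Suc k) \<Delta> V0 G y))"
  have gd0: "gd 0 = (\<lambda>y. w)" unfolding gd_def by simp
  have gdS: "gd (Suc k) y = (SOME w'. (gd k (par y), w') \<in> R (rel y) \<and>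
       ksat R V w' (for_at (card \<Delta> - Suc k) \<Delta> V0 G y))" for k y unfolding gd_def by simp
  have fS: "finite \<Delta>" "finite (succs G x)" for x using fin succs_G_fin by auto
  have claim: "\<forall>y\<in>\<Delta>. dG y = k \<longrightarrow> ksat R V (gd k y) (for_at (card \<Delta> - k) \<Delta> V0 G y)" for k
  proof (induction k)
    case 0 then show ?case using dG_0 assms gd0 by auto
  next
    case (Suc k)
    show ?case
    proof (intro ballI impI)
      fix y assume y: "y \<in> \<Delta>" "dG y = Suc k"
      then have "y \<noteq> rt" using dG_rt by auto
      then obtain p where pe: "(p, y) \<in> E" using rt(3) y by blast
      then obtain r where pr: "(p, y) \<in> G r" using E_iff by blast
      have pp: "par y = p" "rel y = r" using par_eq[OF pe] rel_eq[OF pr] by auto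
      have pD: "p \<in> \<Delta>" using pe E_sub by auto
      have dp: "dG p = k" using dG_edge[OF pe] y by simp
      have "Suc k < card \<Delta>" using dG_less[OF y(1)] y(2) by simp
      then have cs: "card \<Delta> - k = Suc (card \<Delta> - Suc k)" by simp
      have "ksat R V (gd k p) (for_at (card \<Delta> - k) \<Delta> V0 G p)" using Suc pD dp by blast
      then have "\<exists>w'. (gd k p, w') \<in> R r \<and> ksat R V w' (for_at (card \<Delta> - Suc k) \<Delta> V0 G y)"
        unfolding cs ksat_for_at_Suc[OF fS] using pr by blast
      from someI_ex[OF this] show "ksat R V (gd (Suc k) y) (for_at (card \<Delta> - Suc k) \<Delta> V0 G y)"
        unfolding gdS pp by blast
    qed
  qed
  define g where "g y = gd (dG y) y" for y
  have "g rt = w" unfolding g_def dG_rt gd0 by simp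
  moreover have "g x \<in> V x" if x: "x \<in> \<Delta>" for x
  proof -
    have "dG x < card \<Delta>" using dG_less x by blast
    then have cs: "card \<Delta> - dG x = Suc (card \<Delta> - Suc (dG x))" by simp
    have "ksat R V (g x) (for_at (card \<Delta> - dG x) \<Delta> V0 G x)" unfolding g_def using claim x by blast
    then show ?thesis unfolding cs ksat_for_at_Suc[OF fS] using x V0_iff by blast
  qed
  moreover have "(g x, g y) \<in> R r" if e: "(x, y) \<in> G r" for r x y
  proof -
    have xe: "(x, y) \<in> E" using e E_iff by blast
    have x: "x \<in> \<Delta>" "y \<in> \<Delta>" using xe E_sub by auto
    have pp: "par y = x" "rel y = r" using par_eq[OF xe] rel_eq[OF e] by auto
    have dy: "dG y = Suc (dG x)" using dG_edge[OF xe] .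
    have "dG y < card \<Delta>" using dG_less x by blast
    then have cs: "card \<Delta> - dG x = Suc (card \<Delta> - Suc (dG x))" unfolding dy by simp
    have "ksat R V (g x) (for_at (card \<Delta> - dG x) \<Delta> V0 G x)" unfolding g_def using claim x by blast
    then have "\<exists>w'. (g x, w') \<in> R r \<and> ksat R V w' (for_at (card \<Delta> - Suc (dG x)) \<Delta> V0 G y)"
      unfolding cs ksat_for_at_Suc[OF fS] using e by blast
    from someI_ex[OF this] show ?thesis unfolding g_def dy gdS pp by blast
  qed
  ultimately show ?thesis by blast
qed

lemma rt_out: "\<exists>y r. (rt, y) \<in> G r"
proof -
  have "(rt, u) \<in> E\<^sup>*" using rt_reach uv by blast
  then have rv: "(rt, v) \<in> E\<^sup>+" using uvE by (rule rtrancl_trancl_trancl)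
  obtain y where "(rt, y) \<in> E" using tranclD[OF rv] by blast
  then show ?thesis using E_iff by blast
qed

lemma Phi_valid:
  assumes "sat_Phi \<pi> W R" "is_frame W R" "ksat R V w (fst (iota' \<pi>))"
  shows "ksat R V w (snd (iota' \<pi>))"
proof -
  obtain g where g: "g rt = w" "\<forall>x\<in>\<Delta>. g x \<in> V x" "\<forall>r x y. (x, y) \<in> G r \<longrightarrow> (g x, g y) \<in> R r"
    using truth_hom[OF assms(3)[unfolded iota_fst]] by blast
  have gW: "g x \<in> W" if xD: "x \<in> \<Delta>" for x
  proof (cases "x = rt")
    case True
    obtain y r where "(rt, y) \<in> G r" using rt_out by blast
    then have "(g rt, g y) \<in> R r" using g by blast
    then show ?thesis using assms(2) True unfolding is_frame_def by blast
  next
    case False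
    obtain p where "(p, x) \<in> E" using rt(3)[OF xD False] by blast
    then obtain r where "(p, x) \<in> G r" using E_iff by blast
    then have "(g p, g x) \<in> R r" using g by blast
    then show ?thesis using assms(2) unfolding is_frame_def by blast
  qed
  have gW': "\<forall>x\<in>\<Delta>. g x \<in> W" using gW by blast
  have uvR: "(g u, g v) \<in> R S" using spec[OF assms(1)[unfolded sat_Phi_def], of g] gW' g(3) by blast
  have h': "\<forall>r x y. (x, y) \<in> G' r \<longrightarrow> (g x, g y) \<in> R r"
    using g(3) uvR unfolding G'_def by auto
  have "ksat R V (g rt) (for_at (card \<Delta>) \<Delta> V0 G' rt)"
    by (rule hom_truth[OF fin]) (use succs_G'_fin h' g(2) V0_iff in auto)
  then show ?thesis unfolding iota_snd g(1) .
qed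

lemma valid_Phi:
  assumes "frame_valid W R (iota' \<pi>)" "is_frame W R"
  shows "sat_Phi \<pi> W R"
  unfolding sat_Phi_def
proof (intro allI impI)
  fix h assume hW: "\<forall>x\<in>\<Delta>. h x \<in> W" and hh: "\<forall>r x y. (x, y) \<in> G r \<longrightarrow> (h x, h y) \<in> R r"
  define V where "V p = (if p \<in> \<Delta> then {h p} else {})" for p
  have VW: "\<forall>p. V p \<subseteq> W" unfolding V_def using hW by auto
  have fS: "finite \<Delta>" "finite (succs G' x)" for x using fin succs_G'_fin by auto
  have "ksat R V (h rt) (for_at (card \<Delta>) \<Delta> V0 G rt)"
    by (rule hom_truth[OF fin]) (use succs_G_fin hh V0_iff in \<open>auto simp: V_def\<close>)
  then have s: "ksat R V (h rt) (for_at (card \<Delta>) \<Delta> V0 G' rt)"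
    using spec[OF assms(1)[unfolded frame_valid_def], of V] VW hW rt_in unfolding iota_fst iota_snd by blast
  obtain k f where f: "f 0 = rt" "f k = u" "\<forall>i<k. (f i, f (Suc i)) \<in> E"
    "\<forall>i\<le>k. dG (f i) = i \<and> f i \<in> \<Delta>" "Suc k < card \<Delta>" by (rule path)
  have cl: "ksat R V (h (f i)) (for_at (card \<Delta> - i) \<Delta> V0 G' (f i))" if "i \<le> k" for i
    using that
  proof (induction i)
    case 0 then show ?case using s f by simp
  next
    case (Suc i)
    then have e: "(f i, f (Suc i)) \<in> E" using f by simp
    then obtain r where er: "(f i, f (Suc i)) \<in> G' r" using E_iff G_G' by blast
    have cs: "card \<Delta> - i = Suc (card \<Delta> - Suc i)" using Suc f by simp
    have cs2: "card \<Delta> - Suc i = Suc (card \<Delta> - Suc (Suc i))" using Suc f by simp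
    have fD: "f (Suc i) \<in> \<Delta>" using f Suc by blast
    obtain w' where w': "(h (f i), w') \<in> R r" "ksat R V w' (for_at (card \<Delta> - Suc i) \<Delta> V0 G' (f (Suc i)))"
      using Suc er unfolding cs ksat_for_at_Suc[OF fS] by fastforce
    then have "w' \<in> V (f (Suc i))" unfolding cs2 ksat_for_at_Suc[OF fS] using fD V0_iff by blast
    then have "w' = h (f (Suc i))" using fD unfolding V_def by simp
    then show ?case using w' by simp
  qed
  have cs: "card \<Delta> - k = Suc (card \<Delta> - Suc k)" using f by simp
  have cs2: "card \<Delta> - Suc k = Suc (card \<Delta> - Suc (Suc k))" using f by simp
  have "(u, v) \<in> G' S" unfolding G'_def by simp
  then obtain w' where w': "(h u, w') \<in> R S" "ksat R V w' (for_at (card \<Delta> - Suc k) \<Delta> V0 G' v)"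
    using cl[of k] f(2) unfolding cs ksat_for_at_Suc[OF fS] by fastforce
  then have "w' \<in> V v" unfolding cs2 ksat_for_at_Suc[OF fS] using uv V0_iff by blast
  then have "w' = h v" using uv unfolding V_def by simp
  then show "(h u, h v) \<in> R S" using w' by simp
qed

end



context prof begin

lemma slo_chain:
  fixes D :: "'r \<Rightarrow> 'a::{semilattice_inf,order_top} \<Rightarrow> 'a" and b :: "nat \<Rightarrow> 'a"
  assumes mo: "\<forall>r. mono (D r)" and va: "slo_valid D (iota' \<pi>)"
    and coh: "\<forall>r x y. (x, y) \<in> G r \<longrightarrow> b x \<le> D r (b y)"
  shows "\<exists>k f rs m. f 0 = rt \<and> f k = u \<and> (\<forall>i<k. (f i, f (Suc i)) \<in> G (rs i)) \<and>
     (\<forall>i\<le>k. f i \<in> \<Delta> \<and> m i \<le> b (f i)) \<and> b rt \<le> m 0 \<and>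
     (\<forall>i<k. m i \<le> D (rs i) (m (Suc i))) \<and> m k \<le> D S (b v)"
proof -
  obtain k f where f: "f 0 = rt" "f k = u" "\<forall>i<k. (f i, f (Suc i)) \<in> E"
    "\<forall>i\<le>k. dG (f i) = i \<and> f i \<in> \<Delta>" "Suc k < card \<Delta>" by (rule path)
  define rs where "rs i = (SOME r. (f i, f (Suc i)) \<in> G r)" for i
  have rs: "(f i, f (Suc i)) \<in> G (rs i)" if "i < k" for i
  proof -
    have "\<exists>r. (f i, f (Suc i)) \<in> G r" using f(3) that E_iff by blast
    then show ?thesis unfolding rs_def by (rule someI_ex)
  qed
  define m where "m i = slo_eval D b (for_at (card \<Delta> - i) \<Delta> V0 G' (f i))" for i
  have fS: "finite \<Delta>" "finite (succs G' x)" for x using fin succs_G'_fin by auto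
  have "b rt \<le> slo_eval D b (for_at (card \<Delta>) \<Delta> V0 G rt)"
    by (rule hom_slo[OF fin]) (use succs_G_fin mo coh V0_iff in auto)
  also have "\<dots> \<le> m 0" unfolding m_def using va f(1) unfolding slo_valid_def iota_fst iota_snd by simp
  finally have m0: "b rt \<le> m 0" .
  have mb: "m i \<le> b (f i)" if "i \<le> k" for i
  proof -
    have cs: "card \<Delta> - i = Suc (card \<Delta> - Suc i)" using that f(5) by simp
    have fi: "f i \<in> \<Delta>" using f(4) that by blast
    show ?thesis unfolding m_def cs using slo_for_at_Suc[OF fS, of "m i" D b] fi V0_iff
      unfolding m_def cs by blast
  qed
  have mD: "m i \<le> D (rs i) (m (Suc i))" if "i < k" for i
  proof -
    have cs: "card \<Delta> - i = Suc (card \<Delta> - Suc i)" using that f(5) by simp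
    have e: "(f i, f (Suc i)) \<in> G' (rs i)" using rs[OF that] G_G' by blast
    show ?thesis unfolding m_def cs using slo_for_at_Suc[OF fS, of "m i" D b] e
      unfolding m_def cs by blast
  qed
  have mk: "m k \<le> D S (b v)"
  proof -
    have cs: "card \<Delta> - k = Suc (card \<Delta> - Suc k)" using f(5) by simp
    have cs2: "card \<Delta> - Suc k = Suc (card \<Delta> - Suc (Suc k))" using f(5) by simp
    have e: "(u, v) \<in> G' S" unfolding G'_def by simp
    have "m k \<le> slo_eval D b (for_at (Suc (card \<Delta> - Suc k)) \<Delta> V0 G' u)"
      unfolding m_def cs f(2) by simp
    then have "\<forall>r v'. (u, v') \<in> G' r \<longrightarrow> m k \<le> D r (slo_eval D b (for_at (card \<Delta> - Suc k) \<Delta> V0 G' v'))"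
      using slo_for_at_Suc[OF fS(1) fS(2)[of u], of "m k" D b "card \<Delta> - Suc k" V0] by blast
    then have "m k \<le> D S (slo_eval D b (for_at (card \<Delta> - Suc k) \<Delta> V0 G' v))"
      using e by blast
    also have "\<dots> \<le> D S (b v)"
    proof -
      have "slo_eval D b (for_at (card \<Delta> - Suc k) \<Delta> V0 G' v) \<le> b v"
        using slo_for_at_Suc[OF fS, of _ D b] uv V0_iff unfolding cs2 by blast
      then show ?thesis using mo by (simp add: monoD)
    qed
    finally show ?thesis .
  qed
  show ?thesis using f(1,2) rs f(4) mb m0 mD mk by blast
qed

end




fun vsf :: "'r spf \<Rightarrow> nat set" where
  "vsf (Var p) = {p}" | "vsf Top = {}" | "vsf (And a b) = vsf a \<union> vsf b" | "vsf (Dia r x) = {}"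

fun dsf :: "'r spf \<Rightarrow> ('r \<times> 'r spf) list" where
  "dsf (Var p) = []" | "dsf Top = []" | "dsf (And a b) = dsf a @ dsf b" | "dsf (Dia r x) = [(r, x)]"

fun subf :: "'r spf \<Rightarrow> nat list \<Rightarrow> 'r spf" where
  "subf \<phi> [] = \<phi>" | "subf \<phi> (i # is) = subf (snd (dsf \<phi> ! i)) is"

fun validp :: "'r spf \<Rightarrow> nat list \<Rightarrow> bool" where
  "validp \<phi> [] = True" | "validp \<phi> (i # is) = (i < length (dsf \<phi>) \<and> validp (snd (dsf \<phi> ! i)) is)"

lemma eval_vs: "q \<in> vsf \<phi> \<Longrightarrow> slo_eval D a \<phi> \<le> a q"
  by (induction \<phi>) (auto intro: le_infI1 le_infI2)

lemma eval_ds: "(r, \<psi>) \<in> set (dsf \<phi>) \<Longrightarrow> slo_eval D a \<phi> \<le> D r (slo_eval D a \<psi>)"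
  by (induction \<phi>) (auto intro: le_infI1 le_infI2)

lemma ksat_intro: "(\<forall>q\<in>vsf \<phi>. w \<in> V q) \<Longrightarrow> (\<forall>(r, \<psi>)\<in>set (dsf \<phi>). \<exists>w'. (w, w') \<in> R r \<and> ksat R V w' \<psi>)
  \<Longrightarrow> ksat R V w \<phi>"
  by (induction \<phi>) auto

lemma size_ds: "(r, \<psi>) \<in> set (dsf \<phi>) \<Longrightarrow> size \<psi> < size \<phi>"
  by (induction \<phi>) auto

lemma fin_vsf: "finite (vsf \<phi>)" by (induction \<phi>) auto

lemma subf_snoc: "subf \<phi> (p @ [i]) = snd (dsf (subf \<phi> p) ! i)"
  by (induction p arbitrary: \<phi>) auto

lemma validp_snoc: "validp \<phi> (p @ [i]) \<longleftrightarrow> validp \<phi> p \<and> i < length (dsf (subf \<phi> p))"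
  by (induction p arbitrary: \<phi>) auto

lemma validp_set: "{p. validp \<phi> p} = insert [] (\<Union>i<length (dsf \<phi>). Cons i ` {q. validp (snd (dsf \<phi> ! i)) q})"
proof -
  have "validp \<phi> p \<longleftrightarrow> p = [] \<or> (\<exists>i<length (dsf \<phi>). \<exists>q. p = i # q \<and> validp (snd (dsf \<phi> ! i)) q)" for p
    by (cases p) auto
  then show ?thesis by auto
qed

lemma fin_validp: "finite {p. validp \<phi> p}"
proof (induction \<phi> rule: measure_induct_rule[of size])
  case (less \<phi>)
  have "finite {q. validp (snd (dsf \<phi> ! i)) q}" if "i < length (dsf \<phi>)" for i
  proof -
    have "(fst (dsf \<phi> ! i), snd (dsf \<phi> ! i)) \<in> set (dsf \<phi>)" using that by simp
    then have "size (snd (dsf \<phi> ! i)) < size \<phi>" by (rule size_ds)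
    then show ?thesis by (rule less)
  qed
  then show ?case unfolding validp_set[of \<phi>] by auto
qed


locale stree =
  fixes \<sigma> :: "'r spf"
begin

definition "enc (p :: nat list) = (to_nat p :: nat)"
definition "WT = enc ` {p. validp \<sigma> p}"
definition "RT r = {(enc p, enc (p @ [i])) | p i. validp \<sigma> (p @ [i]) \<and> fst (dsf (subf \<sigma> p) ! i) = r}"
definition "VT q = {enc p | p. validp \<sigma> p \<and> q \<in> vsf (subf \<sigma> p)}"
definition "\<rho> = enc []"
definition "dT x = length (from_nat x :: nat list)"

lemma enc_inj[simp]: "enc p = enc q \<longleftrightarrow> p = q" unfolding enc_def by simp
lemma dT_enc[simp]: "dT (enc p) = length p" unfolding dT_def enc_def by simp

lemma RT_iff: "(x, y) \<in> RT r \<longleftrightarrow> (\<exists>p i. x = enc p \<and> y = enc (p @ [i]) \<and> validp \<sigma> (p @ [i]) \<and> fst (dsf (subf \<sigma> p) ! i) = r)"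
  unfolding RT_def by blast

lemma RT_dT: "(x, y) \<in> RT r \<Longrightarrow> dT y = Suc (dT x)"
  unfolding RT_iff by auto

lemma RT_par: "(x, y) \<in> RT r \<Longrightarrow> (x', y) \<in> RT r' \<Longrightarrow> x = x' \<and> r = r'"
  unfolding RT_iff by auto

lemma WT_fin: "finite WT" unfolding WT_def using fin_validp[of \<sigma>] by simp

lemma RT_frame: "RT r \<subseteq> WT \<times> WT"
  unfolding RT_def WT_def using validp_snoc by fastforce

lemma edges_RT: "(x, y) \<in> edges RT \<longleftrightarrow> (\<exists>r. (x, y) \<in> RT r)" unfolding edges_def by blast

lemma succs_RT_fin: "finite (succs RT x)"
proof -
  have "inj_on snd (succs RT x)"
  proof (rule inj_onI)
    fix a b assume A: "a \<in> succs RT x" "b \<in> succs RT x" "snd a = snd b"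
    obtain r y where a: "a = (r, y)" by (cases a)
    obtain r' y' where b: "b = (r', y')" by (cases b)
    have "(x, y) \<in> RT r" "(x, y') \<in> RT r'" "y = y'" using A a b unfolding succs_def by auto
    then have "r = r'" using RT_par by blast
    then show "a = b" using a b \<open>y = y'\<close> by simp
  qed
  moreover have "snd ` succs RT x \<subseteq> WT" unfolding succs_def using RT_frame by fastforce
  ultimately show ?thesis using WT_fin by (meson finite_imageD finite_subset)
qed

lemma VT_fin: "finite {q. x \<in> VT q}"
proof (cases "\<exists>p. validp \<sigma> p \<and> x = enc p")
  case True
  then obtain p where p: "validp \<sigma> p" "x = enc p" by blast
  then have "{q. x \<in> VT q} = vsf (subf \<sigma> p)" unfolding VT_def by auto
  then show ?thesis using fin_vsf by simp
next
  case False
  then have "{q. x \<in> VT q} = {}" unfolding VT_def by auto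
  then show ?thesis by simp
qed

lemma VT_WT: "VT q \<subseteq> WT" unfolding VT_def WT_def by auto

lemma root_reach: "validp \<sigma> p \<Longrightarrow> (\<rho>, enc p) \<in> (edges RT)\<^sup>*"
proof (induction p rule: rev_induct)
  case Nil then show ?case unfolding \<rho>_def by simp
next
  case (snoc i p)
  then have vp: "validp \<sigma> p" using validp_snoc by blast
  have "(enc p, enc (p @ [i])) \<in> RT (fst (dsf (subf \<sigma> p) ! i))" unfolding RT_def using snoc(2) by blast
  then have "(enc p, enc (p @ [i])) \<in> edges RT" unfolding edges_RT by blast
  then show ?case using snoc(1)[OF vp] by simp
qed

lemma tree: "is_tree WT RT"
  unfolding is_tree_def
proof (intro conjI)
  show "finite WT" by (rule WT_fin)
  show "is_frame WT RT" unfolding is_frame_def using RT_frame by blast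
  show "\<forall>r s. r \<noteq> s \<longrightarrow> RT r \<inter> RT s = {}"
  proof (intro allI impI)
    fix r s :: 'r assume "r \<noteq> s"
    then show "RT r \<inter> RT s = {}" using RT_par by fast
  qed
  show "\<exists>x. is_root WT RT x \<and> (\<forall>y. (y, x) \<notin> edges RT) \<and> (\<forall>z\<in>WT. z \<noteq> x \<longrightarrow> (\<exists>!y. (y, z) \<in> edges RT))"
  proof (intro exI conjI)
    show "is_root WT RT \<rho>" unfolding is_root_def
      using root_reach unfolding WT_def \<rho>_def by auto
    show "\<forall>y. (y, \<rho>) \<notin> edges RT" unfolding edges_RT RT_iff \<rho>_def by auto
    show "\<forall>z\<in>WT. z \<noteq> \<rho> \<longrightarrow> (\<exists>!y. (y, z) \<in> edges RT)"
    proof (intro ballI impI)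
      fix z assume z: "z \<in> WT" "z \<noteq> \<rho>"
      then obtain q where q: "validp \<sigma> q" "z = enc q" unfolding WT_def by blast
      then have "q \<noteq> []" using z unfolding \<rho>_def by auto
      then have qq: "butlast q @ [last q] = q" by simp
      have v: "validp \<sigma> (butlast q @ [last q])" using q(1) by (simp only: qq)
      have z': "z = enc (butlast q @ [last q])" using q(2) by (simp only: qq)
      have "(enc (butlast q), z) \<in> RT (fst (dsf (subf \<sigma> (butlast q)) ! last q))"
        unfolding RT_iff using v z' by blast
      then have ex: "(enc (butlast q), z) \<in> edges RT" unfolding edges_RT by blast
      show "\<exists>!y. (y, z) \<in> edges RT"
      proof (rule ex1I[where P="\<lambda>y. (y, z) \<in> edges RT", OF ex])
        fix y assume "(y, z) \<in> edges RT"
        then obtain r where "(y, z) \<in> RT r" unfolding edges_RT by blast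
        then obtain p i where "y = enc p" "z = enc (p @ [i])" unfolding RT_iff by blast
        then show "y = enc (butlast q)" using q by simp
      qed
    qed
  qed
qed

lemma ksat_sub: "validp \<sigma> p \<Longrightarrow> ksat RT VT (enc p) (subf \<sigma> p)"
proof (induction "size (subf \<sigma> p)" arbitrary: p rule: less_induct)
  case less
  show ?case
  proof (rule ksat_intro)
    show "\<forall>q\<in>vsf (subf \<sigma> p). enc p \<in> VT q" unfolding VT_def using less(2) by blast
    show "\<forall>(r, \<psi>)\<in>set (dsf (subf \<sigma> p)). \<exists>w'. (enc p, w') \<in> RT r \<and> ksat RT VT w' \<psi>"
    proof (clarify)
      fix r \<psi> assume "(r, \<psi>) \<in> set (dsf (subf \<sigma> p))"
      then obtain i where i: "i < length (dsf (subf \<sigma> p))" "dsf (subf \<sigma> p) ! i = (r, \<psi>)"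
        by (metis in_set_conv_nth)
      have v: "validp \<sigma> (p @ [i])" using validp_snoc less(2) i by blast
      have s: "subf \<sigma> (p @ [i]) = \<psi>" unfolding subf_snoc i(2) by simp
      have "size \<psi> < size (subf \<sigma> p)" using size_ds i by (metis nth_mem)
      then have "ksat RT VT (enc (p @ [i])) \<psi>" using less(1)[of "p @ [i]"] v s by simp
      moreover have "(enc p, enc (p @ [i])) \<in> RT r" unfolding RT_def using v i by force
      ultimately show "\<exists>w'. (enc p, w') \<in> RT r \<and> ksat RT VT w' \<psi>" by blast
    qed
  qed
qed

lemma ksat_root: "ksat RT VT \<rho> \<sigma>" using ksat_sub[of "[]"] unfolding \<rho>_def by simp

definition "lab D a x = slo_eval D a (subf \<sigma> (from_nat x))"

lemma lab_enc: "lab D a (enc p) = slo_eval D a (subf \<sigma> p)" unfolding lab_def enc_def by simp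

lemma lab_root: "lab D a \<rho> = slo_eval D a \<sigma>" unfolding \<rho>_def lab_enc by simp

lemma lab_VT: "x \<in> VT q \<Longrightarrow> lab D a x \<le> a q"
proof -
  assume "x \<in> VT q"
  then obtain p where "x = enc p" "q \<in> vsf (subf \<sigma> p)" unfolding VT_def by blast
  then show ?thesis using eval_vs lab_enc by metis
qed

lemma lab_RT: "(x, y) \<in> RT r \<Longrightarrow> lab D a x \<le> D r (lab D a y)"
proof -
  assume "(x, y) \<in> RT r"
  then obtain p i where pi: "x = enc p" "y = enc (p @ [i])" "validp \<sigma> (p @ [i])" "fst (dsf (subf \<sigma> p) ! i) = r"
    unfolding RT_iff by blast
  then have i: "i < length (dsf (subf \<sigma> p))" using validp_snoc by blast
  then have "(r, subf \<sigma> (p @ [i])) \<in> set (dsf (subf \<sigma> p))" using pi subf_snoc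
    by (metis nth_mem prod.collapse)
  then show ?thesis unfolding pi lab_enc by (rule eval_ds)
qed

end




definition mt :: "'a::{semilattice_inf,order_top} set \<Rightarrow> 'a" where
  "mt S = foldr inf (SOME xs. set xs = S) top"

lemma foldr_inf_ge: "c \<le> foldr inf xs (top::'a::{semilattice_inf,order_top}) \<longleftrightarrow> (\<forall>s\<in>set xs. c \<le> s)"
  by (induction xs) auto

lemma mt_ge: "finite S \<Longrightarrow> c \<le> mt S \<longleftrightarrow> (\<forall>s\<in>S. c \<le> s)"
proof -
  assume "finite S"
  then have "\<exists>xs. set xs = S" using finite_list by blast
  then have "set (SOME xs. set xs = S) = S" by (rule someI_ex)
  then show ?thesis unfolding mt_def foldr_inf_ge by simp
qed

lemma mt_le: "finite S \<Longrightarrow> s \<in> S \<Longrightarrow> mt S \<le> s"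
  using mt_ge[of S "mt S"] by auto

context stree begin

fun valf :: "('r \<Rightarrow> 'a::{semilattice_inf,order_top} \<Rightarrow> 'a) \<Rightarrow> (nat \<Rightarrow> 'a) \<Rightarrow> ('r \<Rightarrow> (nat \<times> nat) set) \<Rightarrow> nat \<Rightarrow> nat \<Rightarrow> 'a" where
  "valf D a E 0 x = top"
| "valf D a E (Suc n) x = mt (a ` {q. x \<in> VT q} \<union> (\<lambda>(r, y). D r (valf D a E n y)) ` succs E x)"

definition "BB = Suc (Max (dT ` WT))"
lemma dT_B: "x \<in> WT \<Longrightarrow> dT x < BB"
  unfolding BB_def using WT_fin by (simp add: le_imp_less_Suc)

definition "val D a E x = valf D a E (BB - dT x) x"

definition "good E \<longleftrightarrow> (\<forall>r. E r \<subseteq> WT \<times> WT) \<and> (\<forall>r x y. (x, y) \<in> E r \<longrightarrow> dT x < dT y) \<and> (\<forall>x. finite (succs E x))"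

lemma valf_Suc_ge: "good E \<Longrightarrow> finite (succs E x) \<Longrightarrow> c \<le> valf D a E (Suc n) x \<longleftrightarrow>
   (\<forall>q. x \<in> VT q \<longrightarrow> c \<le> a q) \<and> (\<forall>r y. (x, y) \<in> E r \<longrightarrow> c \<le> D r (valf D a E n y))"
proof -
  assume "finite (succs E x)"
  then have f: "finite (a ` {q. x \<in> VT q} \<union> (\<lambda>(r, y). D r (valf D a E n y)) ` succs E x)"
    using VT_fin by simp
  show ?thesis unfolding valf.simps mt_ge[OF f] by (auto simp: succs_def)
qed

lemma valf_stab:
  assumes g: "good E"
  shows "x \<in> WT \<Longrightarrow> BB - dT x \<le> n \<Longrightarrow> valf D a E (Suc n) x = valf D a E n x"
proof (induction n arbitrary: x)
  case 0 then show ?case using dT_B by fastforce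
next
  case (Suc n)
  have "valf D a E n y = valf D a E (Suc n) y" if "(x, y) \<in> E r" for r y
  proof -
    have "y \<in> WT" "dT x < dT y" using g that unfolding good_def by blast+
    then show ?thesis using Suc by simp
  qed
  then have "(\<lambda>(r, y). D r (valf D a E (Suc n) y)) ` succs E x = (\<lambda>(r, y). D r (valf D a E n y)) ` succs E x"
    unfolding succs_def by (auto simp: image_iff) (metis, metis)
  then show ?case by (simp only: valf.simps)
qed

lemma valf_stab2: "good E \<Longrightarrow> x \<in> WT \<Longrightarrow> BB - dT x \<le> n \<Longrightarrow> valf D a E n x = val D a E x"
proof (induction n)
  case 0 then show ?case unfolding val_def by simp
next
  case (Suc n)
  show ?case
  proof (cases "BB - dT x = Suc n")
    case True then show ?thesis unfolding val_def by simp
  next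
    case False
    then have le: "BB - dT x \<le> n" using Suc by simp
    have "valf D a E (Suc n) x = valf D a E n x" using valf_stab[OF Suc.prems(1,2) le] .
    also have "\<dots> = val D a E x" using Suc.IH[OF Suc.prems(1,2) le] .
    finally show ?thesis .
  qed
qed

lemma val_VT: "good E \<Longrightarrow> x \<in> WT \<Longrightarrow> x \<in> VT q \<Longrightarrow> val D a E x \<le> a q"
proof -
  assume g: "good E" and x: "x \<in> WT" "x \<in> VT q"
  have fs: "finite (succs E x)" using g unfolding good_def by blast
  have cs: "BB - dT x = Suc (BB - Suc (dT x))" using dT_B[OF x(1)] by simp
  have v: "val D a E x = valf D a E (Suc (BB - Suc (dT x))) x" unfolding val_def cs by (rule refl)
  show ?thesis unfolding v using valf_Suc_ge[OF g fs, of "valf D a E (Suc (BB - Suc (dT x))) x" D a "BB - Suc (dT x)"] x(2)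
    order_refl by blast
qed

lemma val_E: "good E \<Longrightarrow> (x, y) \<in> E r \<Longrightarrow> val D a E x \<le> D r (val D a E y)"
proof -
  assume g: "good E" and e: "(x, y) \<in> E r"
  have x: "x \<in> WT" "y \<in> WT" "dT x < dT y" using g e unfolding good_def by blast+
  have fs: "finite (succs E x)" using g unfolding good_def by blast
  have cs: "BB - dT x = Suc (BB - Suc (dT x))" using dT_B[OF x(1)] by simp
  have v: "val D a E x = valf D a E (Suc (BB - Suc (dT x))) x" unfolding val_def cs by (rule refl)
  have "val D a E x \<le> D r (valf D a E (BB - Suc (dT x)) y)"
    unfolding v using valf_Suc_ge[OF g fs, of "valf D a E (Suc (BB - Suc (dT x))) x" D a "BB - Suc (dT x)"] e
    order_refl by blast
  moreover have "valf D a E (BB - Suc (dT x)) y = val D a E y"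
  proof -
    have "BB - dT y \<le> BB - Suc (dT x)" using x(3) by (simp add: diff_le_mono2)
    then show ?thesis using valf_stab2[OF g x(2)] by blast
  qed
  ultimately show ?thesis by simp
qed

lemma val_G1:
  assumes g: "good E" and mo: "\<forall>r. mono (D r)"
    and ev: "\<forall>x q. x \<in> VT q \<longrightarrow> e x \<le> a q"
    and ee: "\<forall>r x y. (x, y) \<in> E r \<longrightarrow> e x \<le> D r (e y)"
  shows "e x \<le> val D a E x"
proof -
  have "e x \<le> valf D a E n x" for n
  proof (induction n arbitrary: x)
    case 0 then show ?case by simp
  next
    case (Suc n)
    have fs: "finite (succs E x)" using g unfolding good_def by blast
    have "e x \<le> D r (valf D a E n y)" if "(x, y) \<in> E r" for r y
    proof -
      have "e x \<le> D r (e y)" using ee that by blast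
      also have "\<dots> \<le> D r (valf D a E n y)" using mo Suc.IH by (simp add: monoD)
      finally show ?thesis .
    qed
    then show ?case unfolding valf_Suc_ge[OF g fs] using ev by blast
  qed
  then show ?thesis unfolding val_def by blast
qed

lemma val_truth:
  assumes g: "good E" and mo: "\<forall>r. mono (D r)"
  shows "x \<in> WT \<Longrightarrow> ksat E VT x \<phi> \<Longrightarrow> val D a E x \<le> slo_eval D a \<phi>"
proof (induction \<phi> arbitrary: x)
  case (Var p) then show ?case using val_VT[OF g] by simp
next
  case Top then show ?case by simp
next
  case (And \<phi>1 \<phi>2) then show ?case by simp
next
  case (Dia r \<phi>)
  then obtain y where y: "(x, y) \<in> E r" "ksat E VT y \<phi>" by auto
  have "y \<in> WT" using g y unfolding good_def by blast
  then have "val D a E y \<le> slo_eval D a \<phi>" using Dia y by blast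
  then have "D r (val D a E y) \<le> D r (slo_eval D a \<phi>)" using mo by (simp add: monoD)
  then show ?case using order_trans[OF val_E[OF g y(1), of D a]] by simp
qed

end



lemma ksat_mono: "(\<forall>r. R r \<subseteq> R' r) \<Longrightarrow> ksat R V w \<phi> \<Longrightarrow> ksat R' V w \<phi>"
  by (induction \<phi> arbitrary: w) auto

fun rels :: "'r spf \<Rightarrow> 'r set" where
  "rels (Var p) = {}" | "rels Top = {}" | "rels (And a b) = rels a \<union> rels b" | "rels (Dia r x) = insert r (rels x)"

lemma fin_rels: "finite (rels \<phi>)" by (induction \<phi>) auto

lemma ksat_cong: "(\<forall>r\<in>rels \<phi>. R r = R' r) \<Longrightarrow> ksat R V w \<phi> = ksat R' V w \<phi>"
  by (induction \<phi> arbitrary: w) auto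

locale main = stree \<sigma> for \<sigma> :: "'r spf" +
  fixes \<Pi> :: "'r profile set"
  assumes pa: "\<forall>\<pi>\<in>\<Pi>. tree_profile \<pi> \<and> forward_looking \<pi>" and stab: "stable \<Pi>"
begin

definition "newE r = {(h (pu \<pi>), h (pv \<pi>)) | \<pi> h. \<pi> \<in> \<Pi> \<and> pS \<pi> = r \<and> is_hom (pdom \<pi>) (prel \<pi>) WT RT h}"
definition "R1 r = RT r \<union> newE r"

lemma prof_of: "\<pi> \<in> \<Pi> \<Longrightarrow> prof \<pi>" using pa unfolding prof_def by blast

lemma hom_dT:
  assumes "is_hom (pdom \<pi>) (prel \<pi>) WT RT h"
  shows "(x, y) \<in> (edges (prel \<pi>))\<^sup>+ \<Longrightarrow> dT (h x) < dT (h y)"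
proof (induction rule: trancl_induct)
  case (base y)
  then obtain r where "(x, y) \<in> prel \<pi> r" unfolding edges_def by blast
  then have "(h x, h y) \<in> RT r" using assms unfolding is_hom_def by blast
  then show ?case using RT_dT by simp
next
  case (step y z)
  then obtain r where "(y, z) \<in> prel \<pi> r" unfolding edges_def by blast
  then have "(h y, h z) \<in> RT r" using assms unfolding is_hom_def by blast
  then show ?case using RT_dT step by simp
qed

lemma newE_prop: "(x, y) \<in> newE r \<Longrightarrow> x \<in> WT \<and> y \<in> WT \<and> dT x < dT y"
proof -
  assume "(x, y) \<in> newE r"
  then obtain \<pi> h where p: "\<pi> \<in> \<Pi>" "x = h (pu \<pi>)" "y = h (pv \<pi>)" "is_hom (pdom \<pi>) (prel \<pi>) WT RT h"
    unfolding newE_def by blast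
  interpret P: prof \<pi> using prof_of p(1) .
  have "x \<in> WT" "y \<in> WT" using p P.uv unfolding is_hom_def by auto
  moreover have "dT x < dT y" using hom_dT[OF p(4) P.uvE] p by simp
  ultimately show ?thesis by blast
qed

lemma R1_sub: "(x, y) \<in> R1 r \<Longrightarrow> (x, y) \<in> Pi_closure \<Pi> WT RT r"
proof -
  assume xy: "(x, y) \<in> R1 r"
  show ?thesis unfolding Pi_closure_def
  proof (rule InterI)
    fix X assume "X \<in> {R' r |R'. is_frame WT R' \<and> (\<forall>s. RT s \<subseteq> R' s) \<and> (\<forall>\<pi>\<in>\<Pi>. sat_Phi \<pi> WT R')}"
    then obtain R' where R': "X = R' r" "\<forall>s. RT s \<subseteq> R' s" "\<forall>\<pi>\<in>\<Pi>. sat_Phi \<pi> WT R'" by blast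
    show "(x, y) \<in> X"
    proof (cases "(x, y) \<in> RT r")
      case True then show ?thesis using R' by blast
    next
      case False
      then have "(x, y) \<in> newE r" using xy unfolding R1_def by blast
      then obtain \<pi> h where p: "\<pi> \<in> \<Pi>" "pS \<pi> = r" "x = h (pu \<pi>)" "y = h (pv \<pi>)" "is_hom (pdom \<pi>) (prel \<pi>) WT RT h"
        unfolding newE_def by blast
      have hW: "\<forall>z\<in>pdom \<pi>. h z \<in> WT" using p(5) unfolding is_hom_def by blast
      have he: "\<forall>r' z w. (z, w) \<in> prel \<pi> r' \<longrightarrow> (h z, h w) \<in> R' r'" using p(5) R'(2) unfolding is_hom_def by blast
      have "sat_Phi \<pi> WT R'" using R'(3) p(1) by blast
      from spec[OF this[unfolded sat_Phi_def], of h] hW he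
      have "(h (pu \<pi>), h (pv \<pi>)) \<in> R' (pS \<pi>)" by blast
      then show ?thesis using p R' by simp
    qed
  qed
qed

lemma R1_frame: "is_frame WT R1"
  unfolding is_frame_def R1_def using RT_frame newE_prop by fast

lemma R1_Phi: "\<pi> \<in> \<Pi> \<Longrightarrow> sat_Phi \<pi> WT R1"
  unfolding sat_Phi_def
proof (intro allI impI)
  fix h assume p: "\<pi> \<in> \<Pi>" and hW: "\<forall>x\<in>pdom \<pi>. h x \<in> WT"
    and he: "\<forall>r x y. (x, y) \<in> prel \<pi> r \<longrightarrow> (h x, h y) \<in> R1 r"
  have "is_hom (pdom \<pi>) (prel \<pi>) WT (Pi_closure \<Pi> WT RT) h"
    unfolding is_hom_def using hW he R1_sub by blast
  then have "is_hom (pdom \<pi>) (prel \<pi>) WT RT h" using stab p tree unfolding stable_def by blast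
  then have "(h (pu \<pi>), h (pv \<pi>)) \<in> newE (pS \<pi>)" unfolding newE_def using p by blast
  then show "(h (pu \<pi>), h (pv \<pi>)) \<in> R1 (pS \<pi>)" unfolding R1_def by blast
qed

lemma closure_eq: "Pi_closure \<Pi> WT RT = R1"
proof (rule ext)
  fix r
  have "Pi_closure \<Pi> WT RT r \<subseteq> R1 r" unfolding Pi_closure_def
    using R1_frame R1_Phi unfolding R1_def by blast
  moreover have "R1 r \<subseteq> Pi_closure \<Pi> WT RT r" using R1_sub by auto
  ultimately show "Pi_closure \<Pi> WT RT r = R1 r" by blast
qed

definition "allnew = {(r, x, y). (x, y) \<in> newE r}"
definition "EN N r = RT r \<union> {(x, y). (r, x, y) \<in> N}"

lemma EN_good: "finite N \<Longrightarrow> N \<subseteq> allnew \<Longrightarrow> good (EN N)"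
  unfolding good_def
proof (intro conjI allI impI)
  assume f: "finite N" and N: "N \<subseteq> allnew"
  fix r show "EN N r \<subseteq> WT \<times> WT" unfolding EN_def using RT_frame N newE_prop unfolding allnew_def by blast
next
  fix r x y assume N: "N \<subseteq> allnew" and "(x, y) \<in> EN N r"
  then show "dT x < dT y" unfolding EN_def using RT_dT N newE_prop unfolding allnew_def by fastforce
next
  fix x assume f: "finite N"
  have "succs (EN N) x \<subseteq> succs RT x \<union> (\<lambda>(r, x, y). (r, y)) ` N"
    unfolding succs_def EN_def by force
  then show "finite (succs (EN N) x)" using succs_RT_fin f by (meson finite_Un finite_imageI finite_subset)
qed


lemma step:
  fixes D :: "'r \<Rightarrow> 'a::{semilattice_inf,order_top} \<Rightarrow> 'a"
  assumes mo: "\<forall>r. mono (D r)" and sv: "\<forall>\<pi>\<in>\<Pi>. slo_valid D (iota' \<pi>)"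
    and N0: "finite N0" "N0 \<subseteq> allnew" and e0: "(S0, s, t) \<in> allnew"
    and mn: "\<forall>(r, x, y)\<in>N0. dT s \<le> dT x"
  shows "val D a (EN N0) \<rho> \<le> val D a (EN (insert (S0, s, t) N0)) \<rho>"
proof -
  obtain \<pi> h where p: "\<pi> \<in> \<Pi>" "pS \<pi> = S0" "s = h (pu \<pi>)" "t = h (pv \<pi>)"
    and hh: "is_hom (pdom \<pi>) (prel \<pi>) WT RT h"
    using e0 unfolding allnew_def newE_def by blast
  interpret P: prof \<pi> using prof_of p(1) .
  define E0 where "E0 = EN N0"
  define E1 where "E1 = EN (insert (S0, s, t) N0)"
  have g0: "good E0" unfolding E0_def using EN_good N0 by blast
  have g1: "good E1" unfolding E1_def using EN_good N0 e0 by simp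
  define val0 where "val0 = val D a E0"
  define b where "b q = val0 (h q)" for q
  have hE: "(h x, h y) \<in> RT r" if "(x, y) \<in> prel \<pi> r" for x y r
    using hh that unfolding is_hom_def by blast
  have coh: "\<forall>r x y. (x, y) \<in> prel \<pi> r \<longrightarrow> b x \<le> D r (b y)"
  proof (intro allI impI)
    fix r x y assume "(x, y) \<in> prel \<pi> r"
    then have "(h x, h y) \<in> E0 r" using hE unfolding E0_def EN_def by blast
    then show "b x \<le> D r (b y)" unfolding b_def val0_def using val_E[OF g0] by blast
  qed
  have sv': "slo_valid D (iota' \<pi>)" using sv p(1) by blast
  from P.slo_chain[OF mo sv' coh] obtain k f rs m where ch: "f 0 = P.rt" "f k = pu \<pi>" "\<forall>i<k. (f i, f (Suc i)) \<in> prel \<pi> (rs i)"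
     "\<forall>i\<le>k. f i \<in> pdom \<pi> \<and> m i \<le> b (f i)" "b P.rt \<le> m 0"
     "\<forall>i<k. m i \<le> D (rs i) (m (Suc i))" "m k \<le> D (pS \<pi>) (b (pv \<pi>))"
    by (elim exE conjE) (rule that; assumption)
  have dep: "dT (h (f i)) = dT (h (f 0)) + i" if "i \<le> k" for i
    using that
  proof (induction i)
    case 0 then show ?case by simp
  next
    case (Suc i)
    then have "(h (f i), h (f (Suc i))) \<in> RT (rs i)" using ch(3) hE by simp
    then show ?case using RT_dT Suc by simp
  qed
  have inj: "i = j" if "i \<le> k" "j \<le> k" "h (f i) = h (f j)" for i j
  proof -
    have "dT (h (f i)) = dT (h (f j))" using that(3) by (rule arg_cong)
    then show ?thesis unfolding dep[OF that(1)] dep[OF that(2)] by simp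
  qed
  have dst0: "dT (h (pu \<pi>)) < dT (h (pv \<pi>))" by (rule hom_dT[OF hh P.uvE])
  have dst: "dT s < dT t" using dst0 unfolding p(3,4) .
  have sk: "s = h (f k)" unfolding p(3) ch(2) ..
  have mb: "m i \<le> val0 (h (f i))" if "i \<le> k" for i
    using ch(4) that unfolding b_def by blast
  have m0: "m 0 = val0 (h (f 0))"
  proof (rule order_antisym)
    show "m 0 \<le> val0 (h (f 0))" using mb by simp
    show "val0 (h (f 0)) \<le> m 0" using ch(5) unfolding ch(1) b_def .
  qed
  define e where "e z = (if \<exists>i\<le>k. h (f i) = z then m (THE i. i \<le> k \<and> h (f i) = z) else val0 z)" for z
  have e_path: "e (h (f i)) = m i" if "i \<le> k" for i
  proof -
    have "(THE j. j \<le> k \<and> h (f j) = h (f i)) = i"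
      by (rule the_equality) (use that inj in blast)+
    then show ?thesis unfolding e_def using that by auto
  qed
  have e_off: "e z = val0 z" if "\<forall>i\<le>k. h (f i) \<noteq> z" for z
    unfolding e_def using that by auto
  have e_le: "e z \<le> val0 z" for z
  proof (cases "\<exists>i\<le>k. h (f i) = z")
    case True
    then obtain i where "i \<le> k" "h (f i) = z" by blast
    then show ?thesis using e_path mb by metis
  next
    case False then show ?thesis using e_off by simp
  qed
  have ev: "\<forall>x q. x \<in> VT q \<longrightarrow> e x \<le> a q"
    using e_le val_VT[OF g0] VT_WT unfolding val0_def by (meson order_trans subsetD)
  have ee: "\<forall>r x y. (x, y) \<in> E1 r \<longrightarrow> e x \<le> D r (e y)"
  proof (intro allI impI)
    fix r z1 z2 assume z: "(z1, z2) \<in> E1 r"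
    show "e z1 \<le> D r (e z2)"
    proof (cases "r = S0 \<and> z1 = s \<and> z2 = t")
      case True
      have "\<forall>i\<le>k. h (f i) \<noteq> t"
      proof (intro allI impI notI)
        fix i assume "i \<le> k" "h (f i) = t"
        then show False using dep[of i] dep[of k] dst sk by simp
      qed
      then have "e t = b (pv \<pi>)" using e_off p(4) unfolding b_def by simp
      moreover have "e s = m k" using e_path sk by simp
      ultimately show ?thesis using True ch(7) p(2) by simp
    next
      case False
      then have z0: "(z1, z2) \<in> E0 r" using z unfolding E0_def E1_def EN_def by auto
      show ?thesis
      proof (cases "\<exists>i\<le>k. h (f i) = z2")
        case False
        then have "e z2 = val0 z2" using e_off by blast
        then show ?thesis using e_le[of z1] val_E[OF g0 z0] unfolding val0_def
          by (metis order_trans)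
      next
        case True
        then obtain i where i: "i \<le> k" "h (f i) = z2" by blast
        show ?thesis
        proof (cases i)
          case 0
          have "e (h (f 0)) = m 0" using e_path[of 0] by simp
          then have "e z2 = val0 z2" using i m0 0 by simp
          then show ?thesis using e_le[of z1] val_E[OF g0 z0] unfolding val0_def
            by (metis order_trans)
        next
          case (Suc j)
          have "j < k" using i Suc by simp
          then have "(f j, f (Suc j)) \<in> prel \<pi> (rs j)" using ch(3) by blast
          then have ej0: "(h (f j), h (f (Suc j))) \<in> RT (rs j)" by (rule hE)
          have ej: "(h (f j), z2) \<in> RT (rs j)" using ej0 i(2) unfolding Suc by simp
          have "(z1, z2) \<in> RT r"
          proof (rule ccontr)
            assume "(z1, z2) \<notin> RT r"
            then have "(r, z1, z2) \<in> N0" using z0 unfolding E0_def EN_def by blast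
            then have "dT s \<le> dT z1" using mn by blast
            moreover have "dT z1 < dT z2" using g0 z0 unfolding good_def by blast
            moreover have "dT z2 \<le> dT s" using dep[of i] dep[of k] i sk by simp
            ultimately show False by simp
          qed
          then have "z1 = h (f j) \<and> r = rs j" using RT_par ej by blast
          then show ?thesis using e_path[of j] e_path[of i] i Suc ch(6) by simp
        qed
      qed
    qed
  qed
  have "e \<rho> \<le> val D a E1 \<rho>" using val_G1[OF g1 mo ev ee] .
  moreover have "val0 \<rho> \<le> e \<rho>"
  proof (cases "\<exists>i\<le>k. h (f i) = \<rho>")
    case True
    then obtain i where i: "i \<le> k" "h (f i) = \<rho>" by blast
    have "dT \<rho> = 0" unfolding \<rho>_def by simp
    then have "i = 0" using dep[OF i(1)] i(2) by simp
    then show ?thesis using e_path[OF i(1)] m0 i by simp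
  next
    case False then show ?thesis using e_off by simp
  qed
  ultimately show ?thesis unfolding val0_def E0_def E1_def by simp
qed

end



context main begin

lemma EN_empty: "EN {} = RT" unfolding EN_def by simp

lemma incr:
  fixes D :: "'r \<Rightarrow> 'a::{semilattice_inf,order_top} \<Rightarrow> 'a"
  assumes mo: "\<forall>r. mono (D r)" and sv: "\<forall>\<pi>\<in>\<Pi>. slo_valid D (iota' \<pi>)"
  shows "finite N \<Longrightarrow> N \<subseteq> allnew \<Longrightarrow> val D a (EN {}) \<rho> \<le> val D a (EN N) \<rho>"
proof (induction "card N" arbitrary: N rule: less_induct)
  case less
  show ?case
  proof (cases "N = {}")
    case True then show ?thesis by simp
  next
    case False
    define dd where "dd = (\<lambda>(r::'r, x::nat, y::nat). dT x)"
    have "Min (dd ` N) \<in> dd ` N" using False less(2) by simp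
    then obtain e0 where e0: "e0 \<in> N" "dd e0 = Min (dd ` N)" by auto
    obtain S0 s t where st: "e0 = (S0, s, t)" by (cases e0)
    define N0 where "N0 = N - {e0}"
    have N0: "finite N0" "N0 \<subseteq> allnew" using less(2,3) unfolding N0_def by auto
    have c: "card N0 < card N" unfolding N0_def using e0(1) less(2) by (meson card_Diff1_less)
    have mn: "\<forall>(r, x, y)\<in>N0. dT s \<le> dT x"
    proof (clarify)
      fix r x y assume "(r, x, y) \<in> N0"
      then have "dd (r, x, y) \<in> dd ` N" unfolding N0_def by blast
      then have "Min (dd ` N) \<le> dd (r, x, y)" using less(2) by simp
      then show "dT s \<le> dT x" using e0(2) unfolding st dd_def by simp
    qed
    have e0a: "(S0, s, t) \<in> allnew" using e0 st less(3) by blast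
    have "val D a (EN {}) \<rho> \<le> val D a (EN N0) \<rho>" using less(1)[OF c N0] .
    also have "\<dots> \<le> val D a (EN (insert (S0, s, t) N0)) \<rho>" by (rule step[OF mo sv N0 e0a mn])
    also have "insert (S0, s, t) N0 = N" unfolding N0_def using e0 st by blast
    finally show ?thesis .
  qed
qed

lemma part1:
  fixes D :: "'r \<Rightarrow> 'a::{semilattice_inf,order_top} \<Rightarrow> 'a"
  assumes Kr: "Kr_cons (Sigma' \<Pi>) (\<sigma>, \<tau>) TYPE(nat)"
    and mo: "\<forall>r. mono (D r)" and sv: "\<forall>s\<in>Sigma' \<Pi>. slo_valid D s"
  shows "slo_eval D a \<sigma> \<le> slo_eval D a \<tau>"
proof -
  have sv': "\<forall>\<pi>\<in>\<Pi>. slo_valid D (iota' \<pi>)" using sv unfolding Sigma'_def by blast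
  have fv: "\<forall>s\<in>Sigma' \<Pi>. frame_valid WT R1 s"
  proof
    fix s assume "s \<in> Sigma' \<Pi>"
    then obtain \<pi> where p: "\<pi> \<in> \<Pi>" "s = iota' \<pi>" unfolding Sigma'_def by blast
    interpret P: prof \<pi> using prof_of p(1) .
    show "frame_valid WT R1 s" unfolding p(2) frame_valid_def
      using P.Phi_valid[OF R1_Phi[OF p(1)] R1_frame] by blast
  qed
  have "frame_valid WT R1 (\<sigma>, \<tau>)" using Kr R1_frame fv unfolding Kr_cons_def by blast
  moreover have "\<forall>p. VT p \<subseteq> WT" using VT_WT by blast
  moreover have "\<rho> \<in> WT" unfolding \<rho>_def WT_def by simp
  moreover have "ksat R1 VT \<rho> \<sigma>" using ksat_mono[OF _ ksat_root, of R1] unfolding R1_def by blast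
  ultimately have kt: "ksat R1 VT \<rho> \<tau>" unfolding frame_valid_def by auto
  define N where "N = {(r, x, y). r \<in> rels \<tau> \<and> (x, y) \<in> newE r}"
  have Na: "N \<subseteq> allnew" unfolding N_def allnew_def by blast
  have Nf: "finite N"
  proof -
    have "N \<subseteq> rels \<tau> \<times> WT \<times> WT" unfolding N_def using newE_prop by blast
    then show ?thesis using fin_rels WT_fin by (meson finite_SigmaI finite_subset)
  qed
  have ag: "\<forall>r\<in>rels \<tau>. R1 r = EN N r" unfolding R1_def EN_def N_def by auto
  have kt2: "ksat (EN N) VT \<rho> \<tau>" using ksat_cong[OF ag] kt by simp
  have g: "good (EN N)" by (rule EN_good[OF Nf Na])
  have g0: "good (EN {})" using EN_good by simp
  have "slo_eval D a \<sigma> = lab D a \<rho>" by (simp add: lab_root)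
  also have "\<dots> \<le> val D a (EN {}) \<rho>"
    by (rule val_G1[OF g0 mo]) (use lab_VT lab_RT EN_empty in auto)
  also have "\<dots> \<le> val D a (EN N) \<rho>" by (rule incr[OF mo sv' Nf Na])
  also have "\<dots> \<le> slo_eval D a \<tau>" by (rule val_truth[OF g mo \<open>\<rho> \<in> WT\<close> kt2])
  finally show ?thesis .
qed

end

lemma part2:
  fixes \<Pi> :: "'r profile set"
  assumes pa: "\<forall>\<pi>\<in>\<Pi>. tree_profile \<pi> \<and> forward_looking \<pi>"
    and sc: "SLO_cons (Sigma' \<Pi>) \<iota> TYPE('w set)"
  shows "Kr_cons (Sigma' \<Pi>) \<iota> TYPE('w)"
  unfolding Kr_cons_def
proof (intro allI impI)
  fix W :: "'w set" and R assume fr: "is_frame W R" and fv: "\<forall>s\<in>Sigma' \<Pi>. frame_valid W R s"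
  define D where "D r X = {w. \<exists>v\<in>X. (w, v) \<in> R r}" for r X
  have mo: "\<forall>r. mono (D r)" unfolding D_def mono_def by blast
  have ev: "slo_eval D a \<phi> = {w. ksat R a w \<phi>}" for a \<phi>
    by (induction \<phi>) (auto simp: D_def)
  have sv: "\<forall>s\<in>Sigma' \<Pi>. slo_valid D s"
  proof
    fix s assume sS: "s \<in> Sigma' \<Pi>"
    then obtain \<pi> where p: "\<pi> \<in> \<Pi>" "s = iota' \<pi>" unfolding Sigma'_def by blast
    interpret P: prof \<pi> using pa p(1) unfolding prof_def by blast
    have "frame_valid W R s" using fv sS by blast
    then have "frame_valid W R (iota' \<pi>)" using p(2) by simp
    then have sp: "sat_Phi \<pi> W R" using P.valid_Phi[OF _ fr] by blast
    show "slo_valid D s" unfolding p(2) slo_valid_def ev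
    proof
      fix a show "{w. ksat R a w (fst (iota' \<pi>))} \<le> {w. ksat R a w (snd (iota' \<pi>))}"
        using P.Phi_valid[OF sp fr] by blast
    qed
  qed
  have "slo_valid D \<iota>" using spec[OF sc[unfolded SLO_cons_def], of D] mo sv by blast
  then show "frame_valid W R \<iota>" unfolding frame_valid_def slo_valid_def ev by blast
qed



theorem theorem5p10:
  fixes \<Pi> :: "'r profile set"
  assumes "\<forall>\<pi>\<in>\<Pi>. tree_profile \<pi> \<and> forward_looking \<pi>"
    and "stable \<Pi>"
  shows "spi_complete (Sigma' \<Pi>) TYPE('a::{semilattice_inf,order_top}) TYPE('w)"
  unfolding spi_complete_def
proof (intro conjI allI impI)
  fix \<iota> :: "'r spi" assume Kr: "Kr_cons (Sigma' \<Pi>) \<iota> TYPE(nat)"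
  obtain \<sigma> \<tau> where st: "\<iota> = (\<sigma>, \<tau>)" by (cases \<iota>)
  interpret M: main \<sigma> \<Pi> using assms by unfold_locales auto
  show "SLO_cons (Sigma' \<Pi>) \<iota> TYPE('a)" unfolding SLO_cons_def slo_valid_def st
  proof (intro allI impI)
    fix D :: "'r \<Rightarrow> 'a \<Rightarrow> 'a" and a
    assume mo: "\<forall>r. mono (D r)" and sv: "\<forall>s\<in>Sigma' \<Pi>. \<forall>a. slo_eval D a (fst s) \<le> slo_eval D a (snd s)"
    have sv': "\<forall>s\<in>Sigma' \<Pi>. slo_valid D s" using sv unfolding slo_valid_def .
    show "slo_eval D a (fst (\<sigma>, \<tau>)) \<le> slo_eval D a (snd (\<sigma>, \<tau>))"
      using M.part1[OF Kr[unfolded st] mo sv'] by simp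
  qed
next
  fix \<iota> :: "'r spi" assume "SLO_cons (Sigma' \<Pi>) \<iota> TYPE('w set)"
  then show "Kr_cons (Sigma' \<Pi>) \<iota> TYPE('w)" using part2 assms(1) by blast
qed

end
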